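(* Let $X_1,X_2,\dots$ be independent Poisson random variables with $\mathbb{E}[X_i]=\lambda_i>0$ for $i\in\mathbb{N}$. Define $S_n=\sum_{i=1}^nX_i$, $\overline{\lambda}_n=\frac1n\sum_{i=1}^n\lambda_i$, and $\mathcal{V}(s,n)=n\overline{\lambda}_n(e^s-1)$ for $s\in\mathbb{R}$, $n\in\mathbb{N}$. Then for every positive integer $m$ and all $\theta\in(0,\infty)$, \[ \Pr\Big\{\sup_{n\in\mathbb{N}}\big[\zeta(S_n-m\theta)-\mathcal{V}(\zeta,n)+\mathcal{V}(\zeta,m)\big]\ge0\Big\}\le\Big[\exp\Big(\theta-\overline{\lambda}_m+\theta\ln\frac{\overline{\lambda}_m}{\theta}\Big)\Big]^m, \] where $\zeta=\ln\frac{\theta}{\overline{\lambda}_m}$.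
   Context: $\mathbb{N}$ denotes the set of positive integers. *)

theory Defs
  imports "HOL-Probability.Probability"
begin

definition lam_bar :: "(nat \<Rightarrow> real) \<Rightarrow> nat \<Rightarrow> real" where
  "lam_bar lam n = (1 / real n) * (\<Sum>i=1..n. lam i)"

definition VV :: "(nat \<Rightarrow> real) \<Rightarrow> real \<Rightarrow> nat \<Rightarrow> real" where
  "VV lam s n = real n * lam_bar lam n * (exp s - 1)"

definition partial_sum :: "(nat \<Rightarrow> 'a \<Rightarrow> nat) \<Rightarrow> nat \<Rightarrow> 'a \<Rightarrow> real" where
  "partial_sum X n \<omega> = (\<Sum>i=1..n. real (X i \<omega>))"

end

theory Submission
  imports Defs
begin

lemma poisson_exp_moment:
  assumes "0 < l"
  shows "(\<integral>\<^sup>+k. ennreal (exp (z * real k - l * (exp z - 1))) \<partial>measure_pmf (poisson_pmf l)) = 1"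
proof -
  have l2: "0 < l * exp z" using assms by simp
  have eq: "ennreal (pmf (poisson_pmf l) k) * ennreal (exp (z * real k - l * (exp z - 1)))
      = ennreal (pmf (poisson_pmf (l * exp z)) k)" for k
  proof -
    have "pmf (poisson_pmf l) k * exp (z * real k - l * (exp z - 1))
        = l ^ k / fact k * exp (z * real k) * (exp (-l) * exp (- (l * (exp z - 1))))"
      using assms by (simp add: exp_diff exp_minus exp_add field_simps)
    also have "exp (z * real k) = exp z ^ k" by (simp add: exp_of_nat_mult[symmetric] mult.commute)
    also have "exp (-l) * exp (- (l * (exp z - 1))) = exp (- (l * exp z))"
      by (simp add: exp_add[symmetric] algebra_simps)
    finally show ?thesis using assms l2
      by (simp add: ennreal_mult'[symmetric] power_mult_distrib field_simps)
  qed
  show ?thesis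
    by (simp add: nn_integral_measure_pmf eq nn_integral_pmf)
qed

lemma (in prob_space) indep_var_nn_integral2:
  fixes A B :: "'a \<Rightarrow> ennreal"
  assumes "indep_var borel A borel B"
  shows "(\<integral>\<^sup>+\<omega>. A \<omega> * B \<omega> \<partial>M) = (\<integral>\<^sup>+\<omega>. A \<omega> \<partial>M) * (\<integral>\<^sup>+\<omega>. B \<omega> \<partial>M)"
proof -
  have "(\<integral>\<^sup>+\<omega>. (\<Prod>i\<in>UNIV. case_bool A B i \<omega>) \<partial>M) = (\<Prod>i\<in>UNIV. \<integral>\<^sup>+\<omega>. case_bool A B i \<omega> \<partial>M)"
  proof (rule indep_vars_nn_integral)
    have eq: "case_bool borel borel = (\<lambda>_::bool. borel::ennreal measure)" by (rule ext) (simp split: bool.split)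
    show "indep_vars (\<lambda>_. borel) (case_bool A B) UNIV"
      using assms(1) unfolding indep_var_def eq .
  qed auto
  then show ?thesis by (simp add: UNIV_bool mult.commute)
qed


lemma (in prob_space) ville_finite:
  fixes Y :: "nat \<Rightarrow> 'a \<Rightarrow> real" and c :: real
  assumes indep: "indep_vars (\<lambda>_. borel) Y {1..}"
    and pos: "\<And>i \<omega>. 0 < Y i \<omega>"
    and mean: "\<And>i. i \<ge> 1 \<Longrightarrow> (\<integral>\<^sup>+\<omega>. Y i \<omega> \<partial>M) = 1"
    and cpos: "0 < c"
  shows "ennreal c * emeasure M {\<omega>\<in>space M. \<exists>n\<in>{1..N}. c < (\<Prod>i\<in>{1..n}. Y i \<omega>)} \<le> 1"
proof -
  define Z where "Z n \<omega> = (\<Prod>i\<in>{1..n}. Y i \<omega>)" for n \<omega>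
  define P where "P k \<omega> = (c < Z k \<omega> \<and> (\<forall>j\<in>{1..<k}. Z j \<omega> \<le> c))" for k \<omega>
  define A where "A k = {\<omega>\<in>space M. P k \<omega>}" for k
  have Ym: "Y i \<in> borel_measurable M" if "i \<ge> 1" for i
    using indep that by (auto simp: indep_vars_def)
  have Zm[measurable]: "Z n \<in> borel_measurable M" for n
    unfolding Z_def by (rule borel_measurable_prod) (use Ym in auto)
  have Zpos: "0 < Z n \<omega>" for n \<omega> unfolding Z_def using pos by (simp add: prod_pos)
  have Am[measurable]: "A k \<in> sets M" for k
    unfolding A_def P_def by measurable
  have disj: "disjoint_family_on A {1..N}"
    unfolding disjoint_family_on_def
  proof (intro ballI impI)
    fix k k' assume "k \<in> {1..N}" "k' \<in> {1..N}" "k \<noteq> k'"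
    show "A k \<inter> A k' = {}"
    proof (cases "k < k'")
      case True
      { fix x assume "x \<in> A k" "x \<in> A k'"
        then have "c < Z k x" "\<forall>j\<in>{1..<k'}. Z j x \<le> c" by (auto simp: A_def P_def)
        then have False using True \<open>k \<in> {1..N}\<close> by force }
      then show ?thesis by blast
    next
      case False then have "k' < k" using \<open>k \<noteq> k'\<close> by simp
      { fix x assume "x \<in> A k" "x \<in> A k'"
        then have "c < Z k' x" "\<forall>j\<in>{1..<k}. Z j x \<le> c" by (auto simp: A_def P_def)
        then have False using \<open>k' < k\<close> \<open>k' \<in> {1..N}\<close> by force }
      then show ?thesis by blast
    qed
  qed
  have sub: "{\<omega>\<in>space M. \<exists>n\<in>{1..N}. c < (\<Prod>i\<in>{1..n}. Y i \<omega>)} \<subseteq> (\<Union>k\<in>{1..N}. A k)"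
  proof
    fix \<omega> assume "\<omega> \<in> {\<omega>\<in>space M. \<exists>n\<in>{1..N}. c < (\<Prod>i\<in>{1..n}. Y i \<omega>)}"
    then obtain n where n: "\<omega> \<in> space M" "n \<in> {1..N}" "c < Z n \<omega>" by (auto simp: Z_def)
    define k where "k = (LEAST k. k \<in> {1..N} \<and> c < Z k \<omega>)"
    have k: "k \<in> {1..N} \<and> c < Z k \<omega>" unfolding k_def by (rule LeastI[of _ n]) (use n in auto)
    have "\<not> (j \<in> {1..N} \<and> c < Z j \<omega>)" if "j < k" for j
      using not_less_Least[OF that[unfolded k_def]] .
    then have "\<forall>j\<in>{1..<k}. Z j \<omega> \<le> c" using k by force
    then show "\<omega> \<in> (\<Union>k\<in>{1..N}. A k)" using k n by (auto simp: A_def P_def)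
  qed
  have key: "ennreal c * emeasure M (A k) \<le> (\<integral>\<^sup>+\<omega>. ennreal (Z N \<omega>) * indicator (A k) \<omega> \<partial>M)"
    if k: "k \<in> {1..N}" for k
  proof -
    define W where "W \<omega> = (\<Prod>i\<in>{Suc k..N}. Y i \<omega>)" for \<omega>
    define f1 where "f1 x = ennreal (if c < (\<Prod>i\<in>{1..k}. x i) \<and> (\<forall>j\<in>{1..<k}. (\<Prod>i\<in>{1..j}. x i) \<le> c)
        then (\<Prod>i\<in>{1..k}. x i) else 0)" for x :: "nat \<Rightarrow> real"
    define f2 where "f2 x = ennreal (\<Prod>i\<in>{Suc k..N}. x i)" for x :: "nat \<Rightarrow> real"
    have f1m: "f1 \<in> borel_measurable (PiM {1..k} (\<lambda>_. borel))"
      unfolding f1_def by measurable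
    have f2m: "f2 \<in> borel_measurable (PiM {Suc k..N} (\<lambda>_. borel))"
      unfolding f2_def by measurable
    have "indep_var borel (f1 \<circ> (\<lambda>\<omega>. restrict (\<lambda>i. Y i \<omega>) {1..k})) borel (f2 \<circ> (\<lambda>\<omega>. restrict (\<lambda>i. Y i \<omega>) {Suc k..N}))"
      by (rule indep_var_compose[OF indep_var_restrict[OF indep] f1m f2m]) auto
    also have "(f1 \<circ> (\<lambda>\<omega>. restrict (\<lambda>i. Y i \<omega>) {1..k})) = (\<lambda>\<omega>. ennreal (if P k \<omega> then Z k \<omega> else 0))"
      by (auto simp: fun_eq_iff f1_def P_def Z_def)
    also have "(f2 \<circ> (\<lambda>\<omega>. restrict (\<lambda>i. Y i \<omega>) {Suc k..N})) = (\<lambda>\<omega>. ennreal (W \<omega>))"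
      by (auto simp: fun_eq_iff f2_def W_def)
    finally have ind: "indep_var borel (\<lambda>\<omega>. ennreal (if P k \<omega> then Z k \<omega> else 0)) borel (\<lambda>\<omega>. ennreal (W \<omega>))" .
    have iv: "indep_vars (\<lambda>_. borel) (\<lambda>i \<omega>. ennreal (Y i \<omega>)) {Suc k..N}"
      by (rule indep_vars_subset[OF indep_vars_compose2[OF indep]]) (use k in auto)
    have W1: "(\<integral>\<^sup>+\<omega>. ennreal (W \<omega>) \<partial>M) = 1"
    proof -
      have "(\<integral>\<^sup>+\<omega>. ennreal (W \<omega>) \<partial>M) = (\<integral>\<^sup>+\<omega>. (\<Prod>i\<in>{Suc k..N}. ennreal (Y i \<omega>)) \<partial>M)"
        unfolding W_def using pos by (intro nn_integral_cong) (simp add: prod_ennreal less_imp_le)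
      also have "\<dots> = (\<Prod>i\<in>{Suc k..N}. \<integral>\<^sup>+\<omega>. ennreal (Y i \<omega>) \<partial>M)"
        by (rule indep_vars_nn_integral[OF _ iv]) auto
      also have "\<dots> = 1" using mean by (intro prod.neutral) auto
      finally show ?thesis .
    qed
    have "ennreal c * emeasure M (A k) = (\<integral>\<^sup>+\<omega>. ennreal c * indicator (A k) \<omega> \<partial>M)"
      by (simp add: nn_integral_cmult_indicator)
    also have "\<dots> \<le> (\<integral>\<^sup>+\<omega>. ennreal (if P k \<omega> then Z k \<omega> else 0) \<partial>M)"
      by (intro nn_integral_mono) (auto simp: A_def P_def indicator_def intro!: ennreal_leI)
    also have "\<dots> = (\<integral>\<^sup>+\<omega>. ennreal (if P k \<omega> then Z k \<omega> else 0) \<partial>M) * (\<integral>\<^sup>+\<omega>. ennreal (W \<omega>) \<partial>M)"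
      by (simp add: W1)
    also have "\<dots> = (\<integral>\<^sup>+\<omega>. ennreal (if P k \<omega> then Z k \<omega> else 0) * ennreal (W \<omega>) \<partial>M)"
      by (rule indep_var_nn_integral2[OF ind, symmetric])
    also have "\<dots> = (\<integral>\<^sup>+\<omega>. ennreal (Z N \<omega>) * indicator (A k) \<omega> \<partial>M)"
    proof (intro nn_integral_cong)
      fix \<omega> assume "\<omega> \<in> space M"
      have "{1..N} = {1..k} \<union> {Suc k..N}" using k by auto
      then have "Z N \<omega> = Z k \<omega> * W \<omega>" unfolding Z_def W_def
        by (simp add: prod.union_disjoint[symmetric] ivl_disj_int)
      then show "ennreal (if P k \<omega> then Z k \<omega> else 0) * ennreal (W \<omega>) = ennreal (Z N \<omega>) * indicator (A k) \<omega>"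
        using \<open>\<omega> \<in> space M\<close> Zpos pos by (auto simp: A_def ennreal_mult' W_def prod_nonneg less_imp_le)
    qed
    finally show ?thesis .
  qed
  have "ennreal c * emeasure M {\<omega>\<in>space M. \<exists>n\<in>{1..N}. c < (\<Prod>i\<in>{1..n}. Y i \<omega>)}
      \<le> ennreal c * emeasure M (\<Union>k\<in>{1..N}. A k)"
    by (intro mult_left_mono emeasure_mono sub) auto
  also have "\<dots> = (\<Sum>k\<in>{1..N}. ennreal c * emeasure M (A k))"
  proof -
    have "(\<Sum>k\<in>{1..N}. emeasure M (A k)) = emeasure M (\<Union>k\<in>{1..N}. A k)"
      by (rule sum_emeasure[OF _ disj]) auto
    then show ?thesis by (metis sum_distrib_left)
  qed
  also have "\<dots> \<le> (\<Sum>k\<in>{1..N}. \<integral>\<^sup>+\<omega>. ennreal (Z N \<omega>) * indicator (A k) \<omega> \<partial>M)"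
    by (intro sum_mono key)
  also have "\<dots> = (\<integral>\<^sup>+\<omega>. (\<Sum>k\<in>{1..N}. ennreal (Z N \<omega>) * indicator (A k) \<omega>) \<partial>M)"
    by (rule nn_integral_sum[symmetric]) auto
  also have "\<dots> \<le> (\<integral>\<^sup>+\<omega>. ennreal (Z N \<omega>) \<partial>M)"
  proof (intro nn_integral_mono)
    fix \<omega> assume "\<omega> \<in> space M"
    show "(\<Sum>k\<in>{1..N}. ennreal (Z N \<omega>) * indicator (A k) \<omega>) \<le> ennreal (Z N \<omega>)"
    proof (cases "\<exists>j\<in>{1..N}. \<omega> \<in> A j")
      case True
      then obtain j where "j \<in> {1..N}" "\<omega> \<in> A j" by blast
      then show ?thesis using sum_indicator_disjoint_family[OF disj, of \<omega> j "\<lambda>_. ennreal (Z N \<omega>)"]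
        by simp
    next
      case False then show ?thesis by (simp add: indicator_def)
    qed
  qed
  also have "\<dots> = 1"
  proof -
    have iv: "indep_vars (\<lambda>_. borel) (\<lambda>i \<omega>. ennreal (Y i \<omega>)) {1..N}"
      by (rule indep_vars_subset[OF indep_vars_compose2[OF indep]]) auto
    have "(\<integral>\<^sup>+\<omega>. ennreal (Z N \<omega>) \<partial>M) = (\<integral>\<^sup>+\<omega>. (\<Prod>i\<in>{1..N}. ennreal (Y i \<omega>)) \<partial>M)"
      unfolding Z_def using pos by (intro nn_integral_cong) (simp add: prod_ennreal less_imp_le)
    also have "\<dots> = (\<Prod>i\<in>{1..N}. \<integral>\<^sup>+\<omega>. ennreal (Y i \<omega>) \<partial>M)"
      by (rule indep_vars_nn_integral[OF _ iv]) auto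
    also have "\<dots> = 1" using mean by (intro prod.neutral) auto
    finally show ?thesis .
  qed
  finally show ?thesis .
qed


lemma (in prob_space) ville:
  fixes Y :: "nat \<Rightarrow> 'a \<Rightarrow> real" and c :: real
  assumes indep: "indep_vars (\<lambda>_. borel) Y {1..}"
    and pos: "\<And>i \<omega>. 0 < Y i \<omega>"
    and mean: "\<And>i. i \<ge> 1 \<Longrightarrow> (\<integral>\<^sup>+\<omega>. Y i \<omega> \<partial>M) = 1"
    and cpos: "0 < c"
  shows "measure M {\<omega>\<in>space M. \<exists>n\<in>{1..}. c < (\<Prod>i\<in>{1..n}. Y i \<omega>)} \<le> 1 / c"
proof -
  define B where "B N = {\<omega>\<in>space M. \<exists>n\<in>{1..N}. c < (\<Prod>i\<in>{1..n}. Y i \<omega>)}" for N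
  have Ym: "Y i \<in> borel_measurable M" if "i \<ge> 1" for i
    using indep that by (auto simp: indep_vars_def)
  have Zm[measurable]: "(\<lambda>\<omega>. \<Prod>i\<in>{1..n}. Y i \<omega>) \<in> borel_measurable M" for n
    by (rule borel_measurable_prod) (use Ym in auto)
  have Bm: "B N \<in> sets M" for N unfolding B_def by measurable
  have inc: "incseq B" unfolding incseq_def B_def by force
  have U: "(\<Union>N. B N) = {\<omega>\<in>space M. \<exists>n\<in>{1..}. c < (\<Prod>i\<in>{1..n}. Y i \<omega>)}"
    unfolding B_def by force
  have lim: "(\<lambda>N. measure M (B N)) \<longlonglongrightarrow> measure M (\<Union>N. B N)"
    by (rule finite_Lim_measure_incseq) (use Bm inc in auto)
  have le: "measure M (B N) \<le> 1 / c" for N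
  proof -
    have "ennreal c * emeasure M (B N) \<le> 1"
      unfolding B_def by (rule ville_finite[OF indep pos mean cpos])
    then have "ennreal (c * measure M (B N)) \<le> 1"
      using cpos by (simp add: emeasure_eq_measure ennreal_mult'[symmetric])
    then have "c * measure M (B N) \<le> 1" by (simp add: ennreal_le_1)
    then show ?thesis using cpos by (simp add: field_simps)
  qed
  have "measure M (\<Union>N. B N) \<le> 1 / c"
    by (rule LIMSEQ_le_const2[OF lim]) (use le in auto)
  then show ?thesis using U by simp
qed


theorem theorem18:
  fixes M :: "'a measure" and X :: "nat \<Rightarrow> 'a \<Rightarrow> nat" and lam :: "nat \<Rightarrow> real"
    and m :: nat and \<theta> :: real
  assumes "prob_space M"
    and "\<And>i. i \<ge> 1 \<Longrightarrow> lam i > 0"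
    and "prob_space.indep_vars M (\<lambda>_. count_space UNIV) X {1..}"
    and "\<And>i. i \<ge> 1 \<Longrightarrow> distr M (count_space UNIV) (X i) = measure_pmf (poisson_pmf (lam i))"
    and "m \<ge> 1" and "\<theta> > 0"
  shows "let \<zeta> = ln (\<theta> / lam_bar lam m) in
    measure M {\<omega> \<in> space M.
        (SUP n\<in>{1..}. ereal (\<zeta> * (partial_sum X n \<omega> - real m * \<theta>) - VV lam \<zeta> n + VV lam \<zeta> m)) \<ge> 0}
      \<le> (exp (\<theta> - lam_bar lam m + \<theta> * ln (lam_bar lam m / \<theta>))) ^ m"
proof -
  interpret P: prob_space M by (rule assms(1))
  define L where "L = lam_bar lam m"
  define z where "z = ln (\<theta> / L)"
  have sumpos: "0 < (\<Sum>i=1..m. lam i)"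
    using assms(2,5) by (intro sum_pos) auto
  have Lpos: "0 < L" unfolding L_def lam_bar_def using sumpos assms(5) by simp
  have ez: "exp z = \<theta> / L" unfolding z_def using Lpos assms(6) by simp
  define Y where "Y i \<omega> = exp (z * real (X i \<omega>) - lam i * (exp z - 1))" for i \<omega>
  have Xm: "X i \<in> measurable M (count_space UNIV)" if "i \<ge> 1" for i
    using assms(3) that by (auto simp: P.indep_vars_def)
  have indep: "P.indep_vars (\<lambda>_. borel) Y {1..}"
    unfolding Y_def by (rule P.indep_vars_compose2[OF assms(3)]) simp
  have pos: "\<And>i \<omega>. 0 < Y i \<omega>" unfolding Y_def by simp
  have mean: "(\<integral>\<^sup>+\<omega>. Y i \<omega> \<partial>M) = 1" if i: "i \<ge> 1" for i
  proof -
    have "(\<integral>\<^sup>+\<omega>. Y i \<omega> \<partial>M) = (\<integral>\<^sup>+k. ennreal (exp (z * real k - lam i * (exp z - 1))) \<partial>distr M (count_space UNIV) (X i))"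
      unfolding Y_def by (subst nn_integral_distr) (use Xm[OF i] in auto)
    also have "\<dots> = 1" unfolding assms(4)[OF i] by (rule poisson_exp_moment) (use assms(2) i in auto)
    finally show ?thesis .
  qed
  have VVeq: "VV lam z n = (\<Sum>i=1..n. lam i) * (exp z - 1)" for n
    by (cases "n = 0") (auto simp: VV_def lam_bar_def)
  have Zeq: "(\<Prod>i\<in>{1..n}. Y i \<omega>) = exp (z * partial_sum X n \<omega> - VV lam z n)" for n \<omega>
    unfolding Y_def VVeq partial_sum_def
    by (simp add: exp_sum[symmetric] sum_subtractf sum_distrib_left sum_distrib_right)
  define K where "K = exp (- (z * (real m * \<theta>) - VV lam z m))"
  have Kpos: "0 < K" unfolding K_def by simp
  define F where "F = {\<omega> \<in> space M.
        (SUP n\<in>{1..}. ereal (z * (partial_sum X n \<omega> - real m * \<theta>) - VV lam z n + VV lam z m)) \<ge> 0}"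
  have FK: "measure M F \<le> K * exp e" if e: "0 < e" for e
  proof -
    define c where "c = exp (z * (real m * \<theta>) - VV lam z m - e)"
    have cpos: "0 < c" unfolding c_def by simp
    have sub: "F \<subseteq> {\<omega>\<in>space M. \<exists>n\<in>{1..}. c < (\<Prod>i\<in>{1..n}. Y i \<omega>)}"
    proof
      fix \<omega> assume "\<omega> \<in> F"
      then have \<omega>: "\<omega> \<in> space M" and "ereal (- e) < (SUP n\<in>{1..}. ereal (z * (partial_sum X n \<omega> - real m * \<theta>) - VV lam z n + VV lam z m))"
        using e unfolding F_def by (auto intro: less_le_trans[of _ 0])
      then obtain n where n: "n \<in> {1..}" "- e < z * (partial_sum X n \<omega> - real m * \<theta>) - VV lam z n + VV lam z m"
        by (auto simp: less_SUP_iff)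
      have "c < exp (z * partial_sum X n \<omega> - VV lam z n)"
        unfolding c_def using n(2) by (simp add: algebra_simps)
      then have "c < (\<Prod>i\<in>{1..n}. Y i \<omega>)" by (simp only: Zeq)
      then show "\<omega> \<in> {\<omega>\<in>space M. \<exists>n\<in>{1..}. c < (\<Prod>i\<in>{1..n}. Y i \<omega>)}"
        using \<omega> n(1) by blast
    qed
    have "measure M F \<le> measure M {\<omega>\<in>space M. \<exists>n\<in>{1..}. c < (\<Prod>i\<in>{1..n}. Y i \<omega>)}"
    proof (cases "F \<in> sets M")
      case True
      have Ym: "Y i \<in> borel_measurable M" if "i \<ge> 1" for i
        using indep that by (auto simp: P.indep_vars_def)
      have Zm[measurable]: "(\<lambda>\<omega>. \<Prod>i\<in>{1..n}. Y i \<omega>) \<in> borel_measurable M" for n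
        by (rule borel_measurable_prod) (use Ym in auto)
      have "{\<omega>\<in>space M. \<exists>n\<in>{1..}. c < (\<Prod>i\<in>{1..n}. Y i \<omega>)} \<in> sets M" by measurable
      then show ?thesis using sub by (intro P.finite_measure_mono) auto
    next
      case False then show ?thesis by (simp add: measure_notin_sets)
    qed
    also have "\<dots> \<le> 1 / c" by (rule P.ville[OF indep pos mean cpos])
    also have "1 / c = K * exp e" unfolding c_def K_def by (simp add: exp_diff exp_minus exp_add field_simps)
    finally show ?thesis .
  qed
  have FK2: "measure M F \<le> K"
  proof (rule field_le_epsilon)
    fix d :: real assume d: "0 < d"
    have "measure M F \<le> K * exp (ln (1 + d / K))" proof (rule FK)
      have "1 < 1 + d / K" using d Kpos by simp
      then show "0 < ln (1 + d / K)" by simp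
    qed
    also have "\<dots> = K + d" using d Kpos by (simp add: field_simps)
    finally show "measure M F \<le> K + d" .
  qed
  have "K = (exp (\<theta> - L + \<theta> * ln (L / \<theta>))) ^ m"
  proof -
    have "VV lam z m = real m * (\<theta> - L)"
      unfolding VV_def L_def[symmetric] ez using Lpos by (simp add: field_simps)
    moreover have "ln (L / \<theta>) = - z" unfolding z_def using Lpos assms(6) by (simp add: ln_div)
    ultimately have "- (z * (real m * \<theta>) - VV lam z m) = real m * (\<theta> - L + \<theta> * ln (L / \<theta>))"
      by (simp add: algebra_simps)
    then show ?thesis unfolding K_def by (simp add: exp_of_nat_mult)
  qed
  then show ?thesis using FK2 unfolding F_def Let_def z_def L_def by simp
qed

end
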